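(* Let $S$ be a finite set of possibly partial distributions all with total mass $\textsc{Mass}(S)$, let $\textsc{OPT}_S$ be a minimum-entropy coupling of $S$, and let $\textsc{Major-Profile}_S$ be a minimum-entropy possibly partial distribution $d$ (of total mass $\textsc{Mass}(S)$) subject to $\textsc{Sketch}_d(x)\le\textsc{Profile}_S(x)$ for all $x\in(0,\textsc{Mass}(S)]$. Then $$H(\textsc{OPT}_S)\ge H(\textsc{Major-Profile}_S)\ge \max\Big(H(\textsc{Profile}_S),\,H\big(\textstyle\bigwedge S\big)\Big).$$
   Context: A possibly partial distribution $p$ is a vector of nonnegative reals sorted non-increasingly, $p(1)\ge p(2)\ge\cdots$, with total mass $\textsc{Mass}(p)=\sum_j p(j)\le1$; $H(p)=\sum_j p(j)\log_2(1/p(j))$. A coupling of $S=\{p_1,\dots,p_m\}$ is a nonnegative array $\mathcal C(i_1,\dots,i_m)$ whose sum over all tuples with $k$-th coordinate $i_k$ equals $p_k(i_k)$ for all $k,i_k$; $\textsc{OPT}_S$ minimizes entropy among couplings. $\textsc{Sketch}_p(x)=p(i)$ for $x\in(\sum_{j>i}p(j),\sum_{j\ge i}p(j)]$, defined on $(0,\textsc{Mass}(p)]$. $\textsc{Profile}_S(x)=\min_{p\in S}\textsc{Sketch}_p(x)$ and $H(\textsc{Profile}_S)=\int_0^{\textsc{Mass}(S)}\log_2(1/\textsc{Profile}_S(x))\,dx$. $\bigwedge S$ is the distribution defined by $\bigwedge S(i)=\min_{p\in S}\sum_{j=1}^i p(j)-\sum_{j=1}^{i-1}\bigwedge S(j)$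 (the greatest lower bound of $S$ in the majorization order). *)

theory Defs
  imports "HOL-Analysis.Analysis"
begin

text \<open>Distributions are functions nat => real (index 0 is the largest entry).\<close>

definition mass :: "(nat \<Rightarrow> real) \<Rightarrow> real" where
  "mass p = infsum p UNIV"

definition ppd :: "(nat \<Rightarrow> real) \<Rightarrow> bool" where
  "ppd p \<longleftrightarrow> (\<forall>i. 0 \<le> p i) \<and> (\<forall>i. p (Suc i) \<le> p i) \<and> finite {i. p i \<noteq> 0} \<and> mass p \<le> 1"

definition ent :: "('a \<Rightarrow> real) \<Rightarrow> real" where
  "ent f = infsum (\<lambda>x. f x * log 2 (1 / f x)) UNIV"

definition tail :: "(nat \<Rightarrow> real) \<Rightarrow> nat \<Rightarrow> real" where
  "tail p i = infsum p {i..}"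

definition sketch :: "(nat \<Rightarrow> real) \<Rightarrow> real \<Rightarrow> real" where
  "sketch p x = (\<Sum>i\<in>{i. tail p (Suc i) < x \<and> x \<le> tail p i}. p i)"

definition profile :: "(nat \<Rightarrow> real) set \<Rightarrow> real \<Rightarrow> real" where
  "profile S x = Min ((\<lambda>p. sketch p x) ` S)"

definition profile_entropy :: "(nat \<Rightarrow> real) set \<Rightarrow> real \<Rightarrow> real" where
  "profile_entropy S M = integral {0..M} (\<lambda>x. log 2 (1 / profile S x))"

text \<open>Index tuples of a coupling of S: one index per member of S (extensional, 0 outside S).\<close>
definition tuples :: "(nat \<Rightarrow> real) set \<Rightarrow> ((nat \<Rightarrow> real) \<Rightarrow> nat) set" where
  "tuples S = {t. \<forall>q. q \<notin> S \<longrightarrow> t q = 0}"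

definition is_coupling :: "(nat \<Rightarrow> real) set \<Rightarrow> (((nat \<Rightarrow> real) \<Rightarrow> nat) \<Rightarrow> real) \<Rightarrow> bool" where
  "is_coupling S C \<longleftrightarrow> (\<forall>t. 0 \<le> C t) \<and> (\<forall>t. t \<notin> tuples S \<longrightarrow> C t = 0) \<and>
     (\<forall>p\<in>S. \<forall>i. (C has_sum p i) {t \<in> tuples S. t p = i})"

definition major_feasible :: "(nat \<Rightarrow> real) set \<Rightarrow> real \<Rightarrow> (nat \<Rightarrow> real) \<Rightarrow> bool" where
  "major_feasible S M d \<longleftrightarrow> ppd d \<and> mass d = M \<and> (\<forall>x\<in>{0<..M}. sketch d x \<le> profile S x)"

function meet :: "(nat \<Rightarrow> real) set \<Rightarrow> nat \<Rightarrow> real" where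
  "meet S i = Min ((\<lambda>p. \<Sum>j\<le>i. p j) ` S) - (\<Sum>j<i. meet S j)"
  by auto
termination by (relation "Wellfounded.measure snd") auto

end

theory Submission
  imports Defs "HOL-Library.Multiset"
begin


lemma infsum_fin:
  fixes f :: "'a \<Rightarrow> real"
  assumes "finite B" "B \<subseteq> A" "\<And>x. x \<in> A - B \<Longrightarrow> f x = 0"
  shows "infsum f A = sum f B"
proof -
  have "infsum f A = infsum f B"
    by (rule infsum_cong_neutral) (use assms in auto)
  then show ?thesis using assms by simp
qed

lemma ppd_bound:
  assumes "ppd p" obtains N where "\<And>i. N \<le> i \<Longrightarrow> p i = 0"
proof -
  have "finite {i. p i \<noteq> 0}" using assms by (simp add: ppd_def)
  then obtain N where "\<forall>i\<in>{i. p i \<noteq> 0}. i < N"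
    by (meson finite_nat_set_iff_bounded)
  then show ?thesis using that by (metis linorder_not_less mem_Collect_eq)
qed

lemma ppd_nonneg: "ppd p \<Longrightarrow> 0 \<le> p i" by (simp add: ppd_def)

lemma ppd_mono: assumes "ppd p" "i \<le> j" shows "p j \<le> p i"
proof -
  have "p (i + k) \<le> p i" for k
    by (induction k) (use assms in \<open>auto simp: ppd_def intro: order_trans\<close>)
  then show ?thesis using assms(2) by (metis le_add_diff_inverse)
qed

lemma tail_eq:
  assumes "\<And>i. N \<le> i \<Longrightarrow> p i = 0"
  shows "tail p i = (\<Sum>j=i..<N. p j)"
  unfolding tail_def by (rule infsum_fin) (use assms in auto)

lemma mass_eq:
  assumes "\<And>i. N \<le> i \<Longrightarrow> p i = 0"
  shows "mass p = (\<Sum>j<N. p j)"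
  unfolding mass_def by (rule infsum_fin) (use assms in auto)


context
  fixes p :: "nat \<Rightarrow> real" and N :: nat
  assumes pp: "ppd p" and pN: "\<And>i. N \<le> i \<Longrightarrow> p i = 0"
begin

lemma tl: "tail p i = (\<Sum>j=i..<N. p j)" by (rule tail_eq) (rule pN)
lemma ms: "mass p = (\<Sum>j<N. p j)" by (rule mass_eq) (rule pN)

lemma tail0: "tail p 0 = mass p"
  unfolding tl ms by (simp add: atLeast0LessThan)

lemma tail_Suc: "tail p i = p i + tail p (Suc i)"
proof (cases "i < N")
  case True
  then show ?thesis unfolding tl by (simp add: sum.atLeast_Suc_lessThan)
next
  case False
  then show ?thesis unfolding tl using pN by simp
qed

lemma tail_nonneg: "0 \<le> tail p i"
  unfolding tl using pp by (simp add: ppd_nonneg sum_nonneg)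

lemma tail_big: "N \<le> i \<Longrightarrow> tail p i = 0"
  unfolding tl by simp

lemma tail_anti: "i \<le> j \<Longrightarrow> tail p j \<le> tail p i"
proof (induction j rule: dec_induct)
  case (step n) then show ?case using tail_Suc[of n] ppd_nonneg[OF pp, of n] by linarith
qed simp

lemma prefix_tail: "(\<Sum>j<k. p j) = mass p - tail p k"
proof (induction k)
  case 0 then show ?case using tail0 by simp
next
  case (Suc k) then show ?case using tail_Suc[of k] by simp
qed

lemma sketch_at:
  assumes "tail p (Suc i) < x" "x \<le> tail p i"
  shows "sketch p x = p i"
proof -
  have "{i. tail p (Suc i) < x \<and> x \<le> tail p i} = {i}"
  proof safe
    fix j assume j: "tail p (Suc j) < x" "x \<le> tail p j"
    show "j = i"
    proof (rule ccontr)
      assume "j \<noteq> i"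
      then have "Suc j \<le> i \<or> Suc i \<le> j" by linarith
      then show False using tail_anti[of "Suc j" i] tail_anti[of "Suc i" j] j assms by auto
    qed
  qed (use assms in auto)
  then show ?thesis unfolding sketch_def by simp
qed

lemma sketch_exists:
  assumes "0 < x" "x \<le> mass p"
  obtains i where "tail p (Suc i) < x" "x \<le> tail p i" "i < N"
proof -
  define j where "j = (LEAST j. tail p j < x)"
  have ex: "tail p N < x" using tail_big[of N] assms by simp
  then have jle: "j \<le> N" unfolding j_def by (rule Least_le[of "\<lambda>j. tail p j < x"])
  have tj: "tail p j < x" unfolding j_def by (rule LeastI[of "\<lambda>j. tail p j < x", OF ex])
  have "j \<noteq> 0" using tj tail0 assms by (metis not_less)
  then obtain i where i: "j = Suc i" by (cases j) auto
  have "\<not> tail p i < x" using not_less_Least[of i "\<lambda>j. tail p j < x"] i j_def by simp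
  then show ?thesis using that[of i] tj i jle by simp
qed

lemma sketch_le:
  assumes "0 < x" "x \<le> mass p" "x \<le> tail p k"
  shows "sketch p x \<le> p k"
proof -
  obtain i where i: "tail p (Suc i) < x" "x \<le> tail p i" using sketch_exists assms by blast
  have "k \<le> i"
  proof (rule ccontr)
    assume "\<not> k \<le> i" then have "Suc i \<le> k" by simp
    then show False using tail_anti[of "Suc i" k] i assms by simp
  qed
  then show ?thesis using sketch_at[OF i] ppd_mono[OF pp] by simp
qed

lemma sketch_ge:
  assumes "x \<le> mass p" "tail p (Suc k) < x"
  shows "p k \<le> sketch p x"
proof -
  have "0 < x" using tail_nonneg[of "Suc k"] assms by simp
  then obtain i where i: "tail p (Suc i) < x" "x \<le> tail p i" using sketch_exists assms by blast
  have "i \<le> k"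
  proof (rule ccontr)
    assume "\<not> i \<le> k" then have "Suc k \<le> i" by simp
    then show False using tail_anti[of "Suc k" i] i assms by simp
  qed
  then show ?thesis using sketch_at[OF i] ppd_mono[OF pp] by simp
qed

lemma sketch_pos:
  assumes "0 < x" "x \<le> mass p"
  shows "0 < sketch p x"
proof -
  obtain i where i: "tail p (Suc i) < x" "x \<le> tail p i" using sketch_exists assms by blast
  then show ?thesis using sketch_at[OF i] tail_Suc[of i] by simp
qed

end

lemma sketch_zero: "ppd p \<Longrightarrow> sketch p 0 = 0"
proof -
  assume pp: "ppd p"
  obtain N where "\<And>i. N \<le> i \<Longrightarrow> p i = 0" using ppd_bound[OF pp] by blast
  then have "{i. tail p (Suc i) < 0 \<and> 0 \<le> tail p i} = {}"
    using tail_nonneg[OF pp] by (auto simp: not_less)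
  then show ?thesis unfolding sketch_def by (simp only: sum.empty)
qed


lemma prefix_dom:
  assumes pd: "ppd d" and pp: "ppd p" and md: "mass d = M" and mp: "mass p = M"
    and dom: "\<forall>x\<in>{0<..M}. sketch d x \<le> sketch p x"
  shows "tail p k \<le> tail d k"
proof -
  obtain N1 where N1: "\<And>i. N1 \<le> i \<Longrightarrow> d i = 0" using ppd_bound[OF pd] by blast
  obtain N2 where N2: "\<And>i. N2 \<le> i \<Longrightarrow> p i = 0" using ppd_bound[OF pp] by blast
  note D = tail0[where p=d and N=N1, OF pd N1] tail_Suc[where p=d and N=N1, OF pd N1] tail_nonneg[where p=d and N=N1, OF pd N1] sketch_le[where p=d and N=N1, OF pd N1] sketch_ge[where p=d and N=N1, OF pd N1]
  note P = tail0[where p=p and N=N2, OF pp N2] tail_Suc[where p=p and N=N2, OF pp N2] tail_nonneg[where p=p and N=N2, OF pp N2] sketch_le[where p=p and N=N2, OF pp N2] sketch_ge[where p=p and N=N2, OF pp N2]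
  show ?thesis
  proof (induction k)
    case 0 then show ?case using D(1) P(1) md mp by simp
  next
    case (Suc k)
    show ?case
    proof (rule ccontr)
      assume c: "\<not> tail p (Suc k) \<le> tail d (Suc k)"
      define x where "x = tail p (Suc k)"
      have dk: "p k < d k" using Suc c D(2)[of k] P(2)[of k] by linarith
      have x0: "0 < x" using c D(3)[of "Suc k"] x_def by linarith
      have xM: "x \<le> M" using P(1) P(2)[of k] P(3)[of k] x_def mp ppd_nonneg[OF pp, of k]
        by (metis add_le_same_cancel2 order.trans tail_anti[where p=p and N=N2, OF pp N2] zero_le)
      have "sketch p x \<le> p (Suc k)" using P(4)[of x "Suc k"] x0 xM mp x_def by simp
      moreover have "p (Suc k) \<le> p k" using pp by (simp add: ppd_def)
      moreover have "d k \<le> sketch d x" using D(5)[of x k] xM md c x_def by simp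
      moreover have "sketch d x \<le> sketch p x" using dom x0 xM by simp
      ultimately show False using dk by linarith
    qed
  qed
qed

lemma gibbs1:
  fixes q d :: real assumes "0 < d" "0 \<le> q"
  shows "q * log 2 (1/q) \<le> q * log 2 (1/d) + (d - q) / ln 2"
proof (cases "q = 0")
  case True then show ?thesis using assms by simp
next
  case False
  then have q: "0 < q" using assms by simp
  have "ln (d/q) \<le> d/q - 1" by (rule ln_le_minus_one) (use q assms in simp)
  then have "q * ln (d/q) \<le> q * (d/q - 1)" using q by (simp add: mult_left_mono)
  also have "\<dots> = d - q" using q by (simp add: field_simps)
  finally have *: "q * ln (d/q) \<le> d - q" .
  have "ln (d/q) = ln d - ln q" using q assms by (simp add: ln_div)
  then have "q * (ln (1/q)) \<le> q * ln (1/d) + (d - q)" using * q assms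
    by (simp add: ln_div algebra_simps)
  then have "q * (ln (1/q)) / ln 2 \<le> (q * ln (1/d) + (d - q)) / ln 2"
    by (simp add: divide_right_mono)
  then show ?thesis by (simp add: log_def add_divide_distrib)
qed

lemma schur:
  fixes d q :: "nat \<Rightarrow> real"
  assumes dpos: "\<forall>i<n. 0 < d i" and dmono: "\<forall>i. Suc i < n \<longrightarrow> d (Suc i) \<le> d i"
    and qnn: "\<forall>i. 0 \<le> q i" and tot: "(\<Sum>i<n. q i) = (\<Sum>i<n. d i)"
    and pre: "\<forall>k\<le>n. (\<Sum>i<k. d i) \<le> (\<Sum>i<k. q i)"
  shows "(\<Sum>i<n. q i * log 2 (1/q i)) \<le> (\<Sum>i<n. d i * log 2 (1/d i))"
proof -
  define c where "c i = log 2 (1 / d i)" for i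
  define E where "E k = (\<Sum>i<k. q i - d i)" for k
  have E0: "k \<le> n \<Longrightarrow> 0 \<le> E k" for k using pre by (simp add: E_def sum_subtractf)
  have En: "E n = 0" using tot by (simp add: E_def sum_subtractf)
  have cm: "Suc k < n \<Longrightarrow> c k \<le> c (Suc k)" for k
  proof -
    assume k: "Suc k < n"
    have a: "0 < d (Suc k)" "d (Suc k) \<le> d k" using k dpos dmono by auto
    then have "1 / d k \<le> 1 / d (Suc k)" by (simp add: frac_le)
    then show ?thesis unfolding c_def using a by (intro log_mono) auto
  qed
  have ab: "k < n \<Longrightarrow> (\<Sum>i<Suc k. (q i - d i) * c i) \<le> E (Suc k) * c k" for k
  proof (induction k)
    case 0 then show ?case by (simp add: E_def)
  next
    case (Suc k)
    have "(\<Sum>i<Suc (Suc k). (q i - d i) * c i) = (\<Sum>i<Suc k. (q i - d i) * c i) + (q (Suc k) - d (Suc k)) * c (Suc k)"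
      by simp
    also have "\<dots> \<le> E (Suc k) * c k + (q (Suc k) - d (Suc k)) * c (Suc k)" using Suc by simp
    also have "\<dots> \<le> E (Suc k) * c (Suc k) + (q (Suc k) - d (Suc k)) * c (Suc k)"
      using E0[of "Suc k"] cm[of k] Suc.prems by (simp add: mult_left_mono)
    also have "\<dots> = E (Suc (Suc k)) * c (Suc k)" by (simp add: E_def algebra_simps)
    finally show ?case .
  qed
  have abel: "(\<Sum>i<n. (q i - d i) * c i) \<le> 0"
  proof (cases n)
    case 0 then show ?thesis by simp
  next
    case (Suc m) then show ?thesis using ab[of m] En by simp
  qed
  have "(\<Sum>i<n. q i * log 2 (1/q i)) \<le> (\<Sum>i<n. q i * c i + (d i - q i) / ln 2)"
    by (rule sum_mono) (use gibbs1 dpos qnn c_def in auto)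
  also have "\<dots> = (\<Sum>i<n. q i * c i) + (\<Sum>i<n. d i - q i) / ln 2"
    by (simp add: sum.distrib sum_divide_distrib)
  also have "\<dots> = (\<Sum>i<n. q i * c i)" using tot by (simp add: sum_subtractf)
  also have "\<dots> \<le> (\<Sum>i<n. d i * c i)" using abel by (simp add: algebra_simps sum_subtractf)
  finally show ?thesis by (simp add: c_def)
qed

lemma meet_prefix:
  assumes "finite S" "S \<noteq> {}"
  shows "(\<Sum>j<k. meet S j) = Min ((\<lambda>p. \<Sum>j<k. p j) ` S)"
proof (cases k)
  case 0 then show ?thesis using assms by (simp add: image_constant_conv del: meet.simps)
next
  case (Suc i)
  have "(\<Sum>j<k. meet S j) = meet S i + (\<Sum>j<i. meet S j)" using Suc by (simp del: meet.simps)
  also have "\<dots> = Min ((\<lambda>p. \<Sum>j\<le>i. p j) ` S)" by (subst meet.simps[of S i]) (simp del: meet.simps)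
  finally show ?thesis using Suc by (simp add: lessThan_Suc_atMost del: meet.simps)
qed



lemma coupling_le:
  assumes cp: "is_coupling S C" and t: "t \<in> tuples S" and p: "p \<in> S"
  shows "C t \<le> p (t p)"
proof -
  have h1: "(C has_sum p (t p)) {t' \<in> tuples S. t' p = t p}" using cp p by (simp add: is_coupling_def)
  have h0: "(C has_sum C t) {t}" using has_sum_finite[of "{t}" C] by simp
  show ?thesis
    by (rule has_sum_mono_neutral[OF h0 h1]) (use t cp in \<open>auto simp: is_coupling_def\<close>)
qed

lemma coupling_supp:
  assumes cp: "is_coupling S C" and "C t \<noteq> 0" shows "t \<in> tuples S"
  using assms by (auto simp: is_coupling_def)

lemma coupling_finite:
  assumes cp: "is_coupling S C" and fS: "finite S" and pp: "\<forall>p\<in>S. ppd p"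
  shows "finite {t. C t \<noteq> 0}"
proof -
  define phi where "phi t = (\<lambda>q. if q \<in> S then t q else (0::nat))" for t :: "(nat \<Rightarrow> real) \<Rightarrow> nat"
  have "{t. C t \<noteq> 0} \<subseteq> phi ` (PiE S (\<lambda>q. {i. q i \<noteq> 0}))"
  proof
    fix t assume "t \<in> {t. C t \<noteq> 0}"
    then have ct: "C t \<noteq> 0" by simp
    have tS: "t \<in> tuples S" using coupling_supp[OF cp ct] .
    have cpos: "0 < C t" using cp ct by (auto simp: is_coupling_def order_le_less)
    have "restrict t S \<in> PiE S (\<lambda>q. {i. q i \<noteq> 0})"
      using coupling_le[OF cp tS] cpos by fastforce
    moreover have "t = phi (restrict t S)" using tS by (auto simp: phi_def tuples_def)
    ultimately show "t \<in> phi ` (PiE S (\<lambda>q. {i. q i \<noteq> 0}))" by blast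
  qed
  moreover have "finite (PiE S (\<lambda>q. {i. q i \<noteq> 0}))"
    by (rule finite_PiE[OF fS]) (use pp in \<open>auto simp: ppd_def\<close>)
  ultimately show ?thesis by (meson finite_imageI finite_subset)
qed

lemma fiber_sum:
  assumes cp: "is_coupling S C" and fin: "finite {t. C t \<noteq> 0}" and p: "p \<in> S"
  shows "p i = (\<Sum>t\<in>{t. C t \<noteq> 0 \<and> t p = i}. C t)"
proof -
  have h1: "(C has_sum p i) {t' \<in> tuples S. t' p = i}" using cp p by (simp add: is_coupling_def)
  have "p i = infsum C {t' \<in> tuples S. t' p = i}" using infsumI[OF h1] by simp
  also have "\<dots> = (\<Sum>t\<in>{t. C t \<noteq> 0 \<and> t p = i}. C t)"
    by (rule infsum_fin) (use fin coupling_supp[OF cp] in auto)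
  finally show ?thesis .
qed

definition sortc :: "('a \<Rightarrow> real) \<Rightarrow> nat \<Rightarrow> real" where
  "sortc C i = (let xs = sorted_list_of_multiset (image_mset C (mset_set {t. C t \<noteq> 0}))
     in if i < length xs then xs ! (length xs - Suc i) else 0)"

lemma sortc_sum:
  fixes C :: "'a \<Rightarrow> real"
  defines "L \<equiv> length (sorted_list_of_multiset (image_mset C (mset_set {t. C t \<noteq> 0})))"
  shows "(\<Sum>i<L. f (sortc C i)) = (\<Sum>t\<in>{t. C t \<noteq> 0}. f (C t))"
proof -
  define xs where "xs = sorted_list_of_multiset (image_mset C (mset_set {t. C t \<noteq> 0}))"
  have L: "L = length xs" by (simp add: L_def xs_def)
  have "(\<Sum>i<L. f (sortc C i)) = (\<Sum>i<L. f (xs ! (L - Suc i)))"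
    by (rule sum.cong) (auto simp: sortc_def xs_def[symmetric] L Let_def)
  also have "\<dots> = (\<Sum>i<L. f (xs ! i))" by (rule sum.nat_diff_reindex)
  also have "\<dots> = sum_list (map f xs)" 
    by (simp add: sum_list_sum_nth L atLeast0LessThan)
  also have "\<dots> = sum_mset (image_mset f (mset xs))" by (metis mset_map sum_mset_sum_list)
  also have "\<dots> = (\<Sum>t\<in>{t. C t \<noteq> 0}. f (C t))"
    by (simp add: xs_def sum_unfold_sum_mset[of "\<lambda>t. f (C t)"] multiset.map_comp comp_def)
  finally show ?thesis .
qed

lemma sortc_props:
  fixes C :: "'a \<Rightarrow> real"
  assumes nn: "\<forall>t. 0 \<le> C t"
  defines "L \<equiv> length (sorted_list_of_multiset (image_mset C (mset_set {t. C t \<noteq> 0})))"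
  shows "\<And>i. 0 \<le> sortc C i" "\<And>i. sortc C (Suc i) \<le> sortc C i" "\<And>i. L \<le> i \<Longrightarrow> sortc C i = 0"
proof -
  define xs where "xs = sorted_list_of_multiset (image_mset C (mset_set {t. C t \<noteq> 0}))"
  have L: "L = length xs" by (simp add: L_def xs_def)
  have sc: "sortc C i = (if i < L then xs ! (L - Suc i) else 0)" for i
    by (simp add: sortc_def xs_def[symmetric] L Let_def)
  have srt: "sorted xs" by (simp add: xs_def)
  have setxs: "set xs \<subseteq> C ` UNIV"
  proof -
    have "set xs = set_mset (mset xs)" by simp
    also have "\<dots> \<subseteq> C ` UNIV" by (auto simp: xs_def)
    finally show ?thesis .
  qed
  show "0 \<le> sortc C i" for i
  proof (cases "i < L")
    case True
    then have "xs ! (L - Suc i) \<in> set xs" using L by simp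
    then show ?thesis using setxs nn sc True by auto
  qed (simp add: sc)
  show "sortc C (Suc i) \<le> sortc C i" for i
  proof (cases "Suc i < L")
    case True
    then show ?thesis using sorted_nth_mono[OF srt, of "L - Suc (Suc i)" "L - Suc i"] L sc by simp
  next
    case False
    then show ?thesis using \<open>\<And>i. 0 \<le> sortc C i\<close>[of i] sc by simp
  qed
  show "L \<le> i \<Longrightarrow> sortc C i = 0" for i using sc by simp
qed


lemma coupling_sorted:
  assumes fS: "finite S" and Sne: "S \<noteq> {}" and pp: "\<forall>p\<in>S. ppd p \<and> mass p = M"
    and cp: "is_coupling S C"
  shows "major_feasible S M (sortc C)" "ent (sortc C) = ent C"
proof -
  define F where "F = {t. C t \<noteq> 0}"
  define L where "L = length (sorted_list_of_multiset (image_mset C (mset_set {t. C t \<noteq> 0})))"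
  have nn: "\<forall>t. 0 \<le> C t" using cp by (simp add: is_coupling_def)
  have finF: "finite F" unfolding F_def using coupling_finite[OF cp fS] pp by blast
  note sp = sortc_props[OF nn, folded L_def]
  note ss = sortc_sum[where C=C, folded L_def F_def]
  have cL: "\<And>i. L \<le> i \<Longrightarrow> sortc C i = 0" by (rule sp(3))
  obtain p0 where p0: "p0 \<in> S" using Sne by blast
  have FS: "t \<in> tuples S" if "t \<in> F" for t using coupling_supp[OF cp] that F_def by blast
  have Cle: "C t \<le> p (t p)" if "t \<in> F" "p \<in> S" for t p using coupling_le[OF cp FS[OF that(1)] that(2)] .
  have Cpos: "0 < C t" if "t \<in> F" for t using nn that F_def by (metis mem_Collect_eq order_le_less)
  have totC: "(\<Sum>t\<in>F. C t) = M" if p: "p \<in> S" for p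
  proof -
    have ppd0: "ppd p" using pp p by blast
    obtain N where N: "\<And>i. N \<le> i \<Longrightarrow> p i = 0" using ppd_bound[OF ppd0] by blast
    have img: "(\<lambda>t. t p) ` F \<subseteq> {..<N}"
    proof
      fix j assume "j \<in> (\<lambda>t. t p) ` F"
      then obtain t where t: "t \<in> F" "j = t p" by blast
      then have "p j \<noteq> 0" using Cle[OF t(1) p] Cpos[OF t(1)] by auto
      then show "j \<in> {..<N}" using N by (meson lessThan_iff not_le)
    qed
    have "(\<Sum>t\<in>F. C t) = (\<Sum>j<N. \<Sum>t\<in>{t. t \<in> F \<and> t p = j}. C t)"
      by (rule sum.group[symmetric, OF finF _ img]) simp
    also have "\<dots> = (\<Sum>j<N. p j)"
      by (rule sum.cong) (auto simp: fiber_sum[OF cp finF[unfolded F_def] p] F_def)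
    also have "\<dots> = M" using mass_eq[where p=p and N=N, OF N] pp p by simp
    finally show ?thesis .
  qed
  have massc: "mass (sortc C) = M"
    using mass_eq[where p="sortc C" and N=L, OF cL] ss[of "\<lambda>y. y"] totC[OF p0] by simp
  have ppdc: "ppd (sortc C)"
  proof -
    have "finite {i. sortc C i \<noteq> 0}"
      by (rule finite_subset[of _ "{..<L}"]) (use cL in \<open>auto simp: not_less[symmetric]\<close>)
    moreover have "M \<le> 1" using pp p0 unfolding ppd_def by metis
    ultimately show ?thesis using sp massc by (simp add: ppd_def)
  qed
  obtain Lc where Lc: "\<And>i. L \<le> i \<Longrightarrow> sortc C i = 0" using cL by blast
  show "ent (sortc C) = ent C"
  proof -
    have "ent (sortc C) = (\<Sum>i<L. sortc C i * log 2 (1 / sortc C i))"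
      unfolding ent_def by (rule infsum_fin) (use cL in auto)
    also have "\<dots> = (\<Sum>t\<in>F. C t * log 2 (1 / C t))" by (rule ss)
    also have "\<dots> = ent C" unfolding ent_def by (rule infsum_fin[symmetric]) (use finF F_def in auto)
    finally show ?thesis .
  qed
  have dom: "sortc C x' \<le> 0" if "False" for x' using that by simp
  have skle: "sketch (sortc C) x \<le> sketch p x" if x: "0 < x" "x \<le> M" and p: "p \<in> S" for x p
  proof -
    have ppp: "ppd p" "mass p = M" using pp p by auto
    obtain N where N: "\<And>i. N \<le> i \<Longrightarrow> p i = 0" using ppd_bound[OF ppp(1)] by blast
    obtain i where i: "tail p (Suc i) < x" "x \<le> tail p i" "i < N"
      using sketch_exists[where p=p and N=N, OF ppp(1) N] x ppp by auto
    define v where "v = p i"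
    have skp: "sketch p x = v" using sketch_at[where p=p and N=N, OF ppp(1) N i(1,2)] v_def by simp
    define k where "k = (LEAST k. sortc C k \<le> v)"
    have exk: "sortc C L \<le> v" using cL[of L] ppd_nonneg[OF ppp(1)] v_def by simp
    have kL: "k \<le> L" unfolding k_def by (rule Least_le[of "\<lambda>k. sortc C k \<le> v", OF exk])
    have ck: "sortc C k \<le> v" unfolding k_def by (rule LeastI[of "\<lambda>k. sortc C k \<le> v", OF exk])
    have below: "\<And>j. j < k \<Longrightarrow> v < sortc C j" unfolding k_def using not_less_Least by fastforce
    have above: "\<And>j. k \<le> j \<Longrightarrow> sortc C j \<le> v" using ppd_mono[OF ppdc] ck order_trans by blast
    have "tail (sortc C) k = (\<Sum>j=k..<L. sortc C j)" by (rule tail_eq) (rule cL)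
    also have "\<dots> = (\<Sum>j<L. (if sortc C j \<le> v then sortc C j else 0))"
    proof -
      have "(\<Sum>j<L. (if sortc C j \<le> v then sortc C j else 0)) = (\<Sum>j\<in>{..<L} \<inter> {j. sortc C j \<le> v}. sortc C j)"
        by (simp add: sum.inter_restrict)
      also have "{..<L} \<inter> {j. sortc C j \<le> v} = {k..<L}" using below above kL
        by (auto simp: not_le[symmetric]) (meson leI not_le)
      finally show ?thesis by simp
    qed
    also have "\<dots> = (\<Sum>t\<in>F. (if C t \<le> v then C t else 0))" by (rule ss)
    finally have tk: "tail (sortc C) k = (\<Sum>t\<in>F. (if C t \<le> v then C t else 0))" .
    have img: "(\<lambda>t. t p) ` {t\<in>F. i \<le> t p} \<subseteq> {i..<N}"
    proof
      fix j assume "j \<in> (\<lambda>t. t p) ` {t\<in>F. i \<le> t p}"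
      then obtain t where t: "t \<in> F" "j = t p" "i \<le> t p" by blast
      then have "p j \<noteq> 0" using Cle[OF t(1) p] Cpos[OF t(1)] by auto
      then show "j \<in> {i..<N}" using N t by (meson atLeastLessThan_iff not_le)
    qed
    have "tail p i = (\<Sum>j=i..<N. p j)" by (rule tail_eq) (rule N)
    also have "\<dots> = (\<Sum>j=i..<N. \<Sum>t\<in>{t. t \<in> {t\<in>F. i \<le> t p} \<and> t p = j}. C t)"
      by (rule sum.cong) (auto simp: fiber_sum[OF cp finF[unfolded F_def] p] F_def intro!: sum.cong)
    also have "\<dots> = (\<Sum>t\<in>{t\<in>F. i \<le> t p}. C t)"
      by (rule sum.group[OF _ _ img]) (use finF in auto)
    also have "\<dots> = (\<Sum>t\<in>F. (if i \<le> t p then C t else 0))" by (simp add: sum.inter_filter[OF finF])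
    also have "\<dots> \<le> (\<Sum>t\<in>F. (if C t \<le> v then C t else 0))"
    proof (rule sum_mono)
      fix t assume t: "t \<in> F"
      show "(if i \<le> t p then C t else 0) \<le> (if C t \<le> v then C t else 0)"
      proof (cases "i \<le> t p")
        case True
        then have "C t \<le> v" using Cle[OF t p] ppd_mono[OF ppp(1) True] v_def by simp
        then show ?thesis using True by simp
      qed (use nn in auto)
    qed
    finally have "x \<le> tail (sortc C) k" using i(2) tk by simp
    then have "sketch (sortc C) x \<le> sortc C k"
      using sketch_le[where p="sortc C" and N=L, OF ppdc cL] x massc by simp
    then show ?thesis using ck skp by simp
  qed
  show "major_feasible S M (sortc C)"
    unfolding major_feasible_def profile_def
    using ppdc massc skle fS Sne by (auto intro!: Min.boundedI)
qed



declare meet.simps[simp del]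

lemma ind_integral:
  fixes a b M K :: real
  assumes "0 \<le> a" "a \<le> b" "b \<le> M"
  shows "((\<lambda>x. if a < x \<and> x \<le> b then K else 0) has_integral (K * (b - a))) {0..M}"
proof -
  have "((\<lambda>x. K) has_integral (K * (b - a))) {a..b}"
    using has_integral_const_real[of K a b] assms by (simp add: mult.commute)
  then have *: "((\<lambda>x. if x \<in> {a..b} then K else 0) has_integral (K * (b - a))) {0..M}"
    using has_integral_restrict[of "{a..b}" "{0..M}" "\<lambda>x. K"] assms by auto
  show ?thesis
    by (rule has_integral_spike_finite[where S="{a}", OF _ _ *]) auto
qed

lemma ent_fin:
  fixes d :: "nat \<Rightarrow> real" and N :: nat
  assumes "\<And>i. N \<le> i \<Longrightarrow> d i = 0"
  shows "ent d = (\<Sum>i<N. d i * log 2 (1 / d i))"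
  unfolding ent_def by (rule infsum_fin) (auto simp: assms not_less)

lemma ent_integral:
  assumes pd: "ppd d" and md: "mass d = M" and N: "\<And>i. N \<le> i \<Longrightarrow> d i = 0"
  shows "((\<lambda>x. \<Sum>i<N. if tail d (Suc i) < x \<and> x \<le> tail d i then log 2 (1 / d i) else 0) has_integral ent d) {0..M}"
proof -
  have "((\<lambda>x. \<Sum>i<N. if tail d (Suc i) < x \<and> x \<le> tail d i then log 2 (1 / d i) else 0)
     has_integral (\<Sum>i<N. log 2 (1 / d i) * (tail d i - tail d (Suc i)))) {0..M}"
  proof (rule has_integral_sum)
    fix i assume "i \<in> {..<N}"
    show "((\<lambda>x. if tail d (Suc i) < x \<and> x \<le> tail d i then log 2 (1 / d i) else 0) has_integral
      log 2 (1 / d i) * (tail d i - tail d (Suc i))) {0..M}"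
      using tail_nonneg[where p=d and N=N, OF pd N, of "Suc i"] tail_anti[where p=d and N=N, OF pd N, of i "Suc i"]
             tail_anti[where p=d and N=N, OF pd N, of 0 i] tail0[where p=d and N=N, OF pd N] md
      by (intro ind_integral) auto
  qed simp
  moreover have "(\<Sum>i<N. log 2 (1 / d i) * (tail d i - tail d (Suc i))) = (\<Sum>i<N. d i * log 2 (1 / d i))"
  proof (rule sum.cong)
    fix i assume "i \<in> {..<N}"
    show "log 2 (1 / d i) * (tail d i - tail d (Suc i)) = d i * log 2 (1 / d i)"
      using tail_Suc[where p=d and N=N, OF pd N, of i] by (simp add: mult.commute)
  qed simp
  moreover have "ent d = (\<Sum>i<N. d i * log 2 (1 / d i))" by (rule ent_fin) (rule N)
  ultimately show ?thesis by simp
qed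

lemma sketch_sum:
  assumes pd: "ppd d" and md: "mass d = M" and N: "\<And>i. N \<le> i \<Longrightarrow> d i = 0"
    and x: "0 < x" "x \<le> M"
  shows "(\<Sum>i<N. if tail d (Suc i) < x \<and> x \<le> tail d i then log 2 (1 / d i) else 0) = log 2 (1 / sketch d x)"
proof -
  obtain i0 where i0: "tail d (Suc i0) < x" "x \<le> tail d i0" "i0 < N"
    using sketch_exists[where p=d and N=N, OF pd N] x md by auto
  have uniq: "j = i0" if "tail d (Suc j) < x" "x \<le> tail d j" for j
  proof (rule ccontr)
    assume "j \<noteq> i0"
    then consider "Suc j \<le> i0" | "Suc i0 \<le> j" by linarith
    then show False
    proof cases
      case 1 then show False using tail_anti[where p=d and N=N, OF pd N, of "Suc j" i0] that i0 by linarith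
    next
      case 2 then show False using tail_anti[where p=d and N=N, OF pd N, of "Suc i0" j] that i0 by linarith
    qed
  qed
  have "(\<Sum>i<N. if tail d (Suc i) < x \<and> x \<le> tail d i then log 2 (1 / d i) else 0)
     = (\<Sum>i\<in>{i0}. if tail d (Suc i) < x \<and> x \<le> tail d i then log 2 (1 / d i) else 0)"
  proof (rule sum.mono_neutral_right)
    show "{i0} \<subseteq> {..<N}" using i0 by simp
    show "\<forall>i\<in>{..<N} - {i0}. (if tail d (Suc i) < x \<and> x \<le> tail d i then log 2 (1 / d i) else 0) = 0"
      using uniq by auto
  qed simp
  also have "\<dots> = log 2 (1 / d i0)" using i0 by simp
  finally show ?thesis using sketch_at[where p=d and N=N, OF pd N i0(1,2)] by simp
qed


declare meet.simps[simp del]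

theorem theorem4:
  fixes S :: "(nat \<Rightarrow> real) set" and M :: real
    and C :: "((nat \<Rightarrow> real) \<Rightarrow> nat) \<Rightarrow> real" and d :: "nat \<Rightarrow> real"
  assumes "finite S" and "S \<noteq> {}"
    and "\<forall>p\<in>S. ppd p \<and> mass p = M"
    and "is_coupling S C"
    and "\<forall>C'. is_coupling S C' \<longrightarrow> ent C \<le> ent C'"
    and "major_feasible S M d"
    and "\<forall>d'. major_feasible S M d' \<longrightarrow> ent d \<le> ent d'"
  shows "ent C \<ge> ent d \<and> ent d \<ge> max (profile_entropy S M) (ent (meet S))"
proof -
  note fS = assms(1) and Sne = assms(2) and pp = assms(3) and cp = assms(4) and df = assms(6)
  have pd: "ppd d" and md: "mass d = M" and dsk: "\<forall>x\<in>{0<..M}. sketch d x \<le> profile S x"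
    using df by (auto simp: major_feasible_def)
  obtain N where N: "\<And>i. N \<le> i \<Longrightarrow> d i = 0" using ppd_bound[OF pd] by blast
  have A: "ent d \<le> ent C"
    using coupling_sorted[OF fS Sne pp cp] assms(7) by metis
  obtain p0 where p0: "p0 \<in> S" using Sne by blast
  have M1: "M \<le> 1" using pp p0 unfolding ppd_def by metis
  have dle1: "d i \<le> 1" for i
  proof (cases "i < N")
    case True
    have "d i \<le> (\<Sum>j<N. d j)" by (rule member_le_sum) (use True pd in \<open>auto simp: ppd_nonneg\<close>)
    then show ?thesis using mass_eq[where p=d and N=N, OF N] md M1 by simp
  qed (use N in auto)
  have entd: "ent d = (\<Sum>i<N. d i * log 2 (1 / d i))" by (rule ent_fin) (rule N)
  have ent_nn: "0 \<le> ent d"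
    unfolding entd
  proof (rule sum_nonneg)
    fix i
    show "0 \<le> d i * log 2 (1 / d i)"
    proof (cases "d i = 0")
      case False
      then have di: "0 < d i" "d i \<le> 1" using ppd_nonneg[OF pd, of i] dle1[of i] by auto
      then have "1 \<le> 1 / d i" by simp
      then have "0 \<le> log 2 (1 / d i)" using di by simp
      then show ?thesis using di by simp
    qed simp
  qed
  have skprof: "profile S x \<le> sketch p x" if "p \<in> S" for p x
    unfolding profile_def using fS that by (auto intro!: Min_le)
  have B: "profile_entropy S M \<le> ent d"
  proof (cases "(\<lambda>x. log 2 (1 / profile S x)) integrable_on {0..M}")
    case False
    then show ?thesis unfolding profile_entropy_def using not_integrable_integral[OF False] ent_nn by simp
  next
    case True
    define hh where "hh x = (\<Sum>i<N. if tail d (Suc i) < x \<and> x \<le> tail d i then log 2 (1 / d i) else 0)" for x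
    have hi: "(hh has_integral ent d) {0..M}" unfolding hh_def by (rule ent_integral[OF pd md N])
    have le: "log 2 (1 / profile S x) \<le> hh x" if x: "x \<in> {0..M}" for x
    proof (cases "x = 0")
      case True
      have "profile S 0 = 0"
        unfolding profile_def using sketch_zero pp fS Sne
        by (simp add: image_constant_conv cong: image_cong)
      moreover have "hh 0 = 0" unfolding hh_def
        using tail_nonneg[where p=d and N=N, OF pd N] by (intro sum.neutral) (meson not_less)
      ultimately show ?thesis using True by (simp add: log_def)
    next
      case False
      then have x0: "0 < x" "x \<le> M" using x by auto
      have sp: "0 < sketch d x" using sketch_pos[where p=d and N=N, OF pd N] x0 md by simp
      have "sketch d x \<le> profile S x" using dsk x0 by auto
      then have "1 / profile S x \<le> 1 / sketch d x" using sp by (simp add: frac_le)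
      then have "log 2 (1 / profile S x) \<le> log 2 (1 / sketch d x)"
        using sp \<open>sketch d x \<le> profile S x\<close> by (intro log_mono) auto
      then show ?thesis unfolding hh_def using sketch_sum[OF pd md N x0] by simp
    qed
    have "integral {0..M} (\<lambda>x. log 2 (1 / profile S x)) \<le> integral {0..M} hh"
      by (rule integral_le[OF True]) (use hi le in auto)
    then show ?thesis unfolding profile_entropy_def using integral_unique[OF hi] by simp
  qed
  define n where "n = (LEAST i. d i = 0)"
  have nN: "n \<le> N" unfolding n_def using N by (simp add: Least_le)
  have dn: "d n = 0" unfolding n_def using N LeastI[of "\<lambda>i. d i = 0" N] by simp
  have dpos: "\<forall>i<n. 0 < d i"
    using not_less_Least[of _ "\<lambda>i. d i = 0"] ppd_nonneg[OF pd] n_def by (metis order_le_less)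
  have dz: "\<And>i. n \<le> i \<Longrightarrow> d i = 0" using ppd_mono[OF pd] dn ppd_nonneg[OF pd] by (metis order_antisym)
  define Q where "Q k = Min ((\<lambda>p. \<Sum>j<k. p j) ` S)" for k
  have Qs: "(\<Sum>j<k. meet S j) = Q k" for k unfolding Q_def by (rule meet_prefix[OF fS Sne])
  have PM: "(\<Sum>j<k. p j) \<le> M" if "p \<in> S" for p k
  proof -
    have ppp: "ppd p" "mass p = M" using pp that by auto
    obtain Np where Np: "\<And>i. Np \<le> i \<Longrightarrow> p i = 0" using ppd_bound[OF ppp(1)] by blast
    have "(\<Sum>j<k. p j) = mass p - tail p k" by (rule prefix_tail[where p=p and N=Np, OF ppp(1) Np])
    moreover have "0 \<le> tail p k" by (rule tail_nonneg[where p=p and N=Np, OF ppp(1) Np])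
    ultimately show ?thesis using ppp(2) by linarith
  qed
  have DQ: "(\<Sum>j<k. d j) \<le> Q k" for k
    unfolding Q_def
  proof (rule Min.boundedI)
    show "finite ((\<lambda>p. \<Sum>j<k. p j) ` S)" using fS by simp
    show "(\<lambda>p. \<Sum>j<k. p j) ` S \<noteq> {}" using Sne by simp
  next
    fix a assume "a \<in> (\<lambda>p. \<Sum>j<k. p j) ` S"
    then obtain p where p: "p \<in> S" "a = (\<Sum>j<k. p j)" by blast
    have ppp: "ppd p" "mass p = M" using pp p by auto
    obtain Np where Np: "\<And>i. Np \<le> i \<Longrightarrow> p i = 0" using ppd_bound[OF ppp(1)] by blast
    have dom: "\<forall>x\<in>{0<..M}. sketch d x \<le> sketch p x" using dsk skprof[OF p(1)] order_trans by blast
    have "tail p k \<le> tail d k" by (rule prefix_dom[OF pd ppp(1) md ppp(2) dom])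
    then show "(\<Sum>j<k. d j) \<le> a"
      using prefix_tail[where p=p and N=Np, OF ppp(1) Np, of k] prefix_tail[where p=d and N=N, OF pd N, of k] p md ppp by simp
  qed
  have QM: "Q k \<le> M" for k
    unfolding Q_def using PM[OF p0, of k] fS p0 by (meson Min_le finite_imageI image_eqI order_trans)
  have Qmono: "Q k \<le> Q (Suc k)" for k
    unfolding Q_def
  proof (rule Min.boundedI)
    show "finite ((\<lambda>p. \<Sum>j<Suc k. p j) ` S)" using fS by simp
    show "(\<lambda>p. \<Sum>j<Suc k. p j) ` S \<noteq> {}" using Sne by simp
  next
    fix a assume "a \<in> (\<lambda>p. \<Sum>j<Suc k. p j) ` S"
    then obtain p where p: "p \<in> S" "a = (\<Sum>j<Suc k. p j)" by blast
    have "Min ((\<lambda>p. \<Sum>j<k. p j) ` S) \<le> (\<Sum>j<k. p j)" using fS p by auto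
    also have "\<dots> \<le> a" using p pp ppd_nonneg by auto
    finally show "Min ((\<lambda>p. \<Sum>j<k. p j) ` S) \<le> a" .
  qed
  have qS: "meet S k = Q (Suc k) - Q k" for k using Qs[of "Suc k"] Qs[of k] by (simp del: meet.simps)
  have qnn: "\<forall>i. 0 \<le> meet S i" using Qmono qS by simp
  have Dn: "(\<Sum>j<k. d j) = M" if "n \<le> k" for k
    using prefix_tail[where p=d and N=n, OF pd dz, of k] tail_big[where p=d and N=n, OF pd dz, of k] md that by simp
  have Qn: "Q k = M" if "n \<le> k" for k using DQ[of k] QM[of k] Dn[OF that] by simp
  have qz: "\<And>i. n \<le> i \<Longrightarrow> meet S i = 0" using qS Qn by simp
  have tot: "(\<Sum>i<n. meet S i) = (\<Sum>i<n. d i)" using Qs[of n] Qn[of n] Dn[of n] by simp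
  have pre: "\<forall>k\<le>n. (\<Sum>i<k. d i) \<le> (\<Sum>i<k. meet S i)" using DQ Qs by simp
  have dmono: "\<forall>i. Suc i < n \<longrightarrow> d (Suc i) \<le> d i" using pd by (simp add: ppd_def)
  have e1: "ent d = (\<Sum>i<n. d i * log 2 (1 / d i))" by (rule ent_fin) (rule dz)
  have e2: "ent (meet S) = (\<Sum>i<n. meet S i * log 2 (1 / meet S i))" by (rule ent_fin) (rule qz)
  have Cc: "ent (meet S) \<le> ent d"
    unfolding e1 e2 by (rule schur[OF dpos dmono qnn tot pre])
  show ?thesis using A B Cc by simp
qed

end
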